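(* Let $(X,\mu)$ be a standard probability space, let $T$ be a bounded self-adjoint operator on $L^2(X,\mu)$, let $k\in\mathbb{N}$, and let $(A_i)_{1\le i\le k}$ be a $\mu$-measurable partition of $X$. Let $(T_{ij})_{i,j=1}^k$ be the block decomposition of $T$ with respect to $L^2(X)=\bigoplus_{i=1}^k L^2(A_i)$, i.e. $T_{ij}:L^2(A_j)\to L^2(A_i)$ is the composition of $T$ restricted to $L^2(A_j)$ with the orthogonal projection onto $L^2(A_i)$. Then $$(k-1)\,m(T)+M(T)\le\sum_{i=1}^k M(T_{ii}).$$
   Context: For a bounded self-adjoint operator $S$ on a Hilbert space $H$, $M(S)=\sup_{0\ne f\in H}\langle Sf,f\rangle/\langle f,f\rangle$ and $m(S)=\inf_{0\ne f\in H}\langle Sf,f\rangle/\langle f,f\rangle$. *)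

theory Defs
  imports "HOL-Probability.Probability"
begin

definition standard_prob_space :: "'a measure \<Rightarrow> bool" where
  "standard_prob_space M \<longleftrightarrow> prob_space M \<and>
     (\<exists>(Xt :: 'a topology) N. completely_metrizable_space Xt \<and> separable_space Xt \<and>
        space N = topspace Xt \<and> sets N = sigma_sets (topspace Xt) {U. openin Xt U} \<and>
        M = completion N)"

text \<open>Elements of L^2(X,mu) (complex-valued), represented by functions.\<close>
definition L2 :: "'a measure \<Rightarrow> ('a \<Rightarrow> complex) set" where
  "L2 M = {f. f \<in> borel_measurable M \<and> integrable M (\<lambda>x. (cmod (f x))\<^sup>2)}"

definition L2_on :: "'a measure \<Rightarrow> 'a set \<Rightarrow> ('a \<Rightarrow> complex) set" where
  "L2_on M A = {f \<in> L2 M. AE x in M. x \<notin> A \<longrightarrow> f x = 0}"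

definition l2_inner :: "'a measure \<Rightarrow> ('a \<Rightarrow> complex) \<Rightarrow> ('a \<Rightarrow> complex) \<Rightarrow> complex" where
  "l2_inner M f g = integral\<^sup>L M (\<lambda>x. f x * cnj (g x))"

definition bounded_op_L2 :: "'a measure \<Rightarrow> (('a \<Rightarrow> complex) \<Rightarrow> ('a \<Rightarrow> complex)) \<Rightarrow> bool" where
  "bounded_op_L2 M T \<longleftrightarrow>
     (\<forall>f \<in> L2 M. T f \<in> L2 M) \<and>
     (\<forall>f \<in> L2 M. \<forall>g \<in> L2 M. (AE x in M. f x = g x) \<longrightarrow> (AE x in M. T f x = T g x)) \<and>
     (\<forall>f \<in> L2 M. \<forall>g \<in> L2 M. \<forall>c::complex.
        AE x in M. T (\<lambda>y. c * f y + g y) x = c * T f x + T g x) \<and>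
     (\<exists>C. \<forall>f \<in> L2 M. Re (l2_inner M (T f) (T f)) \<le> C * Re (l2_inner M f f))"

definition selfadjoint_op_L2 :: "'a measure \<Rightarrow> (('a \<Rightarrow> complex) \<Rightarrow> ('a \<Rightarrow> complex)) \<Rightarrow> bool" where
  "selfadjoint_op_L2 M T \<longleftrightarrow> bounded_op_L2 M T \<and>
     (\<forall>f \<in> L2 M. \<forall>g \<in> L2 M. l2_inner M (T f) g = l2_inner M f (T g))"

text \<open>M(S) and m(S) for an operator S on the closed subspace H of L^2(M)
  (with the L^2(M) inner product). The quotient <Sf,f>/<f,f> is real for self-adjoint S;
  we take its real part.\<close>
definition Mop :: "'a measure \<Rightarrow> ('a \<Rightarrow> complex) set \<Rightarrow> (('a \<Rightarrow> complex) \<Rightarrow> ('a \<Rightarrow> complex)) \<Rightarrow> real" where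
  "Mop M H S = Sup {Re (l2_inner M (S f) f / l2_inner M f f) | f. f \<in> H \<and> l2_inner M f f \<noteq> 0}"

definition mop :: "'a measure \<Rightarrow> ('a \<Rightarrow> complex) set \<Rightarrow> (('a \<Rightarrow> complex) \<Rightarrow> ('a \<Rightarrow> complex)) \<Rightarrow> real" where
  "mop M H S = Inf {Re (l2_inner M (S f) f / l2_inner M f f) | f. f \<in> H \<and> l2_inner M f f \<noteq> 0}"

text \<open>Block T_ij : L^2(A_j) -> L^2(A_i): T restricted to L^2(A_j), followed by the
  orthogonal projection onto L^2(A_i) (multiplication by the indicator of A_i).\<close>
definition block_op :: "'a set \<Rightarrow> (('a \<Rightarrow> complex) \<Rightarrow> ('a \<Rightarrow> complex)) \<Rightarrow> ('a \<Rightarrow> complex) \<Rightarrow> ('a \<Rightarrow> complex)" where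
  "block_op Ai T f = (\<lambda>x. indicator Ai x * T f x)"

end

theory Submission imports Defs begin

lemma cnj_measurable[measurable]:
  "g \<in> borel_measurable M \<Longrightarrow> (\<lambda>x. cnj (g x)) \<in> borel_measurable M"
  by (rule borel_measurable_continuous_on[OF linear_continuous_on[OF bounded_linear_cnj]])

lemma sq_sum_le: "(a + b)\<^sup>2 \<le> 2*a\<^sup>2 + 2*(b::real)\<^sup>2"
proof -
  have "0 \<le> (a-b)\<^sup>2" by simp
  thus ?thesis using power2_sum[of a b] power2_diff[of a b] by linarith
qed

lemma L2_lin:
  assumes f: "f \<in> L2 M" and g: "g \<in> L2 M"
  shows "(\<lambda>x. c * f x + g x) \<in> L2 M"
proof -
  have fm[measurable]: "f \<in> borel_measurable M" and gm[measurable]: "g \<in> borel_measurable M"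
    using f g by (auto simp: L2_def)
  have fi: "integrable M (\<lambda>x. (cmod (f x))\<^sup>2)" and gi: "integrable M (\<lambda>x. (cmod (g x))\<^sup>2)"
    using f g by (auto simp: L2_def)
  have bi: "integrable M (\<lambda>x. 2 * (cmod c)\<^sup>2 * (cmod (f x))\<^sup>2 + 2 * (cmod (g x))\<^sup>2)"
    using fi gi by auto
  have pw: "(cmod (c * f x + g x))\<^sup>2 \<le> 2 * (cmod c)\<^sup>2 * (cmod (f x))\<^sup>2 + 2 * (cmod (g x))\<^sup>2" for x
  proof -
    have "cmod (c * f x + g x) \<le> cmod c * cmod (f x) + cmod (g x)"
      by (metis norm_mult norm_triangle_ineq)
    hence "(cmod (c * f x + g x))\<^sup>2 \<le> (cmod c * cmod (f x) + cmod (g x))\<^sup>2"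
      by (simp add: power_mono)
    also have "\<dots> \<le> 2 * (cmod c)\<^sup>2 * (cmod (f x))\<^sup>2 + 2 * (cmod (g x))\<^sup>2"
    proof -
      have "\<forall>a b::real. (a + b)\<^sup>2 \<le> 2 * a\<^sup>2 + 2 * b\<^sup>2"
        using sq_sum_le by blast
      hence "(cmod c * cmod (f x) + cmod (g x))\<^sup>2 \<le> 2 * (cmod c * cmod (f x))\<^sup>2 + 2 * (cmod (g x))\<^sup>2" by blast
      thus ?thesis by (simp add: power_mult_distrib)
    qed
    finally show ?thesis by simp
  qed
  have "integrable M (\<lambda>x. (cmod (c * f x + g x))\<^sup>2)"
    by (rule Bochner_Integration.integrable_bound[OF bi]) (use pw in auto)
  thus ?thesis by (simp add: L2_def)
qed

lemma L2_inner_int: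
  assumes f: "f \<in> L2 M" and g: "g \<in> L2 M"
  shows "integrable M (\<lambda>x. f x * cnj (g x))"
proof -
  have fm[measurable]: "f \<in> borel_measurable M" and gm[measurable]: "g \<in> borel_measurable M"
    using f g by (auto simp: L2_def)
  have fi: "integrable M (\<lambda>x. (cmod (f x))\<^sup>2)" and gi: "integrable M (\<lambda>x. (cmod (g x))\<^sup>2)"
    using f g by (auto simp: L2_def)
  have bi: "integrable M (\<lambda>x. (cmod (f x))\<^sup>2 + (cmod (g x))\<^sup>2)"
    using fi gi by auto
  have pw: "norm (f x * cnj (g x)) \<le> (cmod (f x))\<^sup>2 + (cmod (g x))\<^sup>2" for x
  proof -
    have "norm (f x * cnj (g x)) = cmod (f x) * cmod (g x)" by (simp add: norm_mult)
    also have "\<dots> \<le> (cmod (f x))\<^sup>2 + (cmod (g x))\<^sup>2"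
      using sum_squares_bound[of "cmod (f x)" "cmod (g x)"] mult_nonneg_nonneg[OF norm_ge_zero[of "f x"] norm_ge_zero[of "g x"]] by linarith
    finally show ?thesis by simp
  qed
  show ?thesis
    apply (rule Bochner_Integration.integrable_bound[OF bi])
     apply measurable
    using pw by auto
qed

lemma L2_meas[measurable_dest]: "f \<in> L2 M \<Longrightarrow> f \<in> borel_measurable M"
  by (simp add: L2_def)

lemma ip_lin_left:
  assumes "f \<in> L2 M" "g \<in> L2 M" "h \<in> L2 M"
  shows "l2_inner M (\<lambda>x. c * f x + g x) h = c * l2_inner M f h + l2_inner M g h"
proof -
  have "(\<lambda>x. (c * f x + g x) * cnj (h x)) = (\<lambda>x. c * (f x * cnj (h x)) + g x * cnj (h x))"
    by (simp add: algebra_simps)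
  thus ?thesis using L2_inner_int[OF assms(1,3)] L2_inner_int[OF assms(2,3)]
    by (simp add: l2_inner_def)
qed

lemma ip_cnj: "l2_inner M g f = cnj (l2_inner M f g)"
proof -
  have "(\<lambda>x. g x * cnj (f x)) = (\<lambda>x. cnj (f x * cnj (g x)))" by (simp add: mult.commute)
  thus ?thesis unfolding l2_inner_def by (simp only:) (rule Bochner_Integration.integral_cnj)
qed

lemma ip_lin_right:
  assumes "f \<in> L2 M" "g \<in> L2 M" "h \<in> L2 M"
  shows "l2_inner M h (\<lambda>x. c * f x + g x) = cnj c * l2_inner M h f + l2_inner M h g"
  using ip_lin_left[OF assms, of c] ip_cnj[of M h] ip_cnj[of M h f] ip_cnj[of M h g]
  by (metis complex_cnj_add complex_cnj_cnj complex_cnj_mult)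

lemma ip_AE:
  assumes "f \<in> borel_measurable M" "g \<in> borel_measurable M" "f' \<in> borel_measurable M" "g' \<in> borel_measurable M"
    "AE x in M. f x = f' x" "AE x in M. g x = g' x"
  shows "l2_inner M f g = l2_inner M f' g'"
  unfolding l2_inner_def
  by (rule integral_cong_AE) (use assms in \<open>auto elim: AE_mp\<close>)

lemma Re_ip_ff: "Re (l2_inner M f f) = integral\<^sup>L M (\<lambda>x. (cmod (f x))\<^sup>2)"
  and ip_ff: "l2_inner M f f = complex_of_real (integral\<^sup>L M (\<lambda>x. (cmod (f x))\<^sup>2))"
proof -
  have "(\<lambda>x. f x * cnj (f x)) = (\<lambda>x. complex_of_real ((cmod (f x))\<^sup>2))"
    by (rule ext) (metis complex_norm_square of_real_power)
  hence e: "l2_inner M f f = complex_of_real (integral\<^sup>L M (\<lambda>x. (cmod (f x))\<^sup>2))"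
    unfolding l2_inner_def by (simp only:) (rule integral_complex_of_real)
  show "l2_inner M f f = complex_of_real (integral\<^sup>L M (\<lambda>x. (cmod (f x))\<^sup>2))" by (fact e)
  show "Re (l2_inner M f f) = integral\<^sup>L M (\<lambda>x. (cmod (f x))\<^sup>2)" by (simp add: e)
qed

lemma N_nonneg: "0 \<le> Re (l2_inner M f f)"
  by (simp add: Re_ip_ff)

lemma N_zero_AE:
  assumes "f \<in> L2 M" "Re (l2_inner M f f) = 0"
  shows "AE x in M. f x = 0"
proof -
  have "integrable M (\<lambda>x. (cmod (f x))\<^sup>2)" using assms by (simp add: L2_def)
  hence "AE x in M. (cmod (f x))\<^sup>2 = 0"
    using integral_nonneg_eq_0_iff_AE[of M "\<lambda>x. (cmod (f x))\<^sup>2"] assms(2) by (simp add: Re_ip_ff)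
  thus ?thesis by auto
qed

lemma ip_zero_right:
  assumes "g \<in> borel_measurable M" "f \<in> borel_measurable M" "AE x in M. f x = 0"
  shows "l2_inner M g f = 0"
proof -
  have "l2_inner M g f = l2_inner M g (\<lambda>x. 0)"
    by (rule ip_AE) (use assms in auto)
  thus ?thesis by (simp add: l2_inner_def)
qed

lemma Re_div_N:
  assumes "l2_inner M f f \<noteq> 0"
  shows "Re (z / l2_inner M f f) = Re z / Re (l2_inner M f f)"
  by (simp add: ip_ff[of M f] Re_divide_of_real)

lemma N_pos_iff: "l2_inner M f f \<noteq> 0 \<longleftrightarrow> Re (l2_inner M f f) > 0"
proof -
  have r: "0 \<le> integral\<^sup>L M (\<lambda>x. (cmod (f x))\<^sup>2)" using N_nonneg[of M f] by (simp add: Re_ip_ff)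
  show ?thesis unfolding ip_ff[of M f] Re_complex_of_real of_real_eq_0_iff using r by linarith
qed

lemma sa_L2: "selfadjoint_op_L2 M T \<Longrightarrow> f \<in> L2 M \<Longrightarrow> T f \<in> L2 M"
  by (simp add: selfadjoint_op_L2_def bounded_op_L2_def)

lemma sa_AE: "selfadjoint_op_L2 M T \<Longrightarrow> f \<in> L2 M \<Longrightarrow> g \<in> L2 M \<Longrightarrow> AE x in M. f x = g x
   \<Longrightarrow> AE x in M. T f x = T g x"
  by (simp add: selfadjoint_op_L2_def bounded_op_L2_def)

lemma sa_lin: "selfadjoint_op_L2 M T \<Longrightarrow> f \<in> L2 M \<Longrightarrow> g \<in> L2 M
   \<Longrightarrow> AE x in M. T (\<lambda>y. c * f y + g y) x = c * T f x + T g x"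
  by (simp add: selfadjoint_op_L2_def bounded_op_L2_def)

lemma sa_sym: "selfadjoint_op_L2 M T \<Longrightarrow> f \<in> L2 M \<Longrightarrow> g \<in> L2 M
   \<Longrightarrow> l2_inner M (T f) g = l2_inner M f (T g)"
  by (simp add: selfadjoint_op_L2_def)

lemma Re_bound_pw: "\<bar>Re (a * cnj b)\<bar> \<le> ((cmod a)\<^sup>2 + (cmod b)\<^sup>2) / 2"
proof -
  have "\<bar>Re (a * cnj b)\<bar> \<le> cmod (a * cnj b)" by (rule abs_Re_le_cmod)
  also have "\<dots> = cmod a * cmod b" by (simp add: norm_mult)
  also have "\<dots> \<le> ((cmod a)\<^sup>2 + (cmod b)\<^sup>2) / 2"
  proof -
    have "2 * (cmod a * cmod b) \<le> (cmod a)\<^sup>2 + (cmod b)\<^sup>2"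
      using sum_squares_bound[of "cmod a" "cmod b"] by (simp add: mult.assoc)
    hence "cmod a * cmod b * 2 \<le> (cmod a)\<^sup>2 + (cmod b)\<^sup>2" by (simp add: mult.commute)
    thus ?thesis by (simp add: le_divide_eq)
  qed
  finally show ?thesis .
qed

lemma abs_helper: "(a::real) \<le> C * n \<Longrightarrow> q \<le> (a + n) / 2 \<Longrightarrow> - q \<le> (a + n) / 2 \<Longrightarrow> \<bar>q\<bar> \<le> (C + 1) / 2 * n"
proof -
  assume h: "a \<le> C * n" "q \<le> (a + n) / 2" "- q \<le> (a + n) / 2"
  have e: "(C + 1) / 2 * n = (C * n + n) / 2" by (simp add: algebra_simps)
  have m: "(a + n) / 2 \<le> (C * n + n) / 2" using h(1) by (intro divide_right_mono) auto
  have "q \<le> (C * n + n) / 2" using h(2) m by (rule order_trans)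
  moreover have "- q \<le> (C * n + n) / 2" using h(3) m by (rule order_trans)
  ultimately show ?thesis unfolding e abs_le_iff by auto
qed

lemma sa_bd:
  assumes sa: "selfadjoint_op_L2 M T"
  shows "\<exists>K. \<forall>f\<in>L2 M. \<bar>Re (l2_inner M (T f) f)\<bar> \<le> K * Re (l2_inner M f f)"
proof -
  obtain C where C: "\<forall>f \<in> L2 M. Re (l2_inner M (T f) (T f)) \<le> C * Re (l2_inner M f f)"
    using sa by (auto simp: selfadjoint_op_L2_def bounded_op_L2_def)
  have "\<bar>Re (l2_inner M (T f) f)\<bar> \<le> (C + 1) / 2 * Re (l2_inner M f f)" if f: "f \<in> L2 M" for f
  proof -
    have Tf: "T f \<in> L2 M" using sa f by (rule sa_L2)
    have i1: "integrable M (\<lambda>x. T f x * cnj (f x))" by (rule L2_inner_int[OF Tf f])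
    have i2: "integrable M (\<lambda>x. ((cmod (T f x))\<^sup>2 + (cmod (f x))\<^sup>2) / 2)"
      using Tf f by (auto simp: L2_def)
    have eq: "Re (l2_inner M (T f) f) = integral\<^sup>L M (\<lambda>x. Re (T f x * cnj (f x)))"
      unfolding l2_inner_def by (rule integral_Re[OF i1, symmetric])
    have eq2: "integral\<^sup>L M (\<lambda>x. ((cmod (T f x))\<^sup>2 + (cmod (f x))\<^sup>2) / 2)
       = (Re (l2_inner M (T f) (T f)) + Re (l2_inner M f f)) / 2"
      using Tf f by (simp add: Re_ip_ff L2_def)
    have ir: "integrable M (\<lambda>x. Re (T f x * cnj (f x)))" by (rule integrable_bounded_linear[OF bounded_linear_Re i1])
    have pw: "Re (T f x * cnj (f x)) \<le> ((cmod (T f x))\<^sup>2 + (cmod (f x))\<^sup>2) / 2"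
       "- Re (T f x * cnj (f x)) \<le> ((cmod (T f x))\<^sup>2 + (cmod (f x))\<^sup>2) / 2" for x
      using Re_bound_pw[of "T f x" "f x"] unfolding abs_le_iff by linarith+
    have a: "integral\<^sup>L M (\<lambda>x. Re (T f x * cnj (f x))) \<le> integral\<^sup>L M (\<lambda>x. ((cmod (T f x))\<^sup>2 + (cmod (f x))\<^sup>2) / 2)"
      by (rule integral_mono[OF ir i2]) (rule pw(1))
    have b: "integral\<^sup>L M (\<lambda>x. - Re (T f x * cnj (f x))) \<le> integral\<^sup>L M (\<lambda>x. ((cmod (T f x))\<^sup>2 + (cmod (f x))\<^sup>2) / 2)"
      by (rule integral_mono[OF integrable_minus[OF ir] i2]) (rule pw(2))
    have "Re (l2_inner M (T f) (T f)) \<le> C * Re (l2_inner M f f)" using C f by blast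
    moreover have a': "Re (l2_inner M (T f) f) \<le> (Re (l2_inner M (T f) (T f)) + Re (l2_inner M f f)) / 2"
      using a unfolding eq[symmetric] eq2 .
    moreover have b': "- Re (l2_inner M (T f) f) \<le> (Re (l2_inner M (T f) (T f)) + Re (l2_inner M f f)) / 2"
      using b unfolding integral_minus eq[symmetric] eq2 .
    moreover have eqK: "(C + 1) / 2 * Re (l2_inner M f f) = (C * Re (l2_inner M f f) + Re (l2_inner M f f)) / 2"
      by (simp add: algebra_simps)
    ultimately show ?thesis using abs_helper by metis
  qed
  thus ?thesis by blast
qed

lemma Mop_upper:
  assumes H: "H \<subseteq> L2 M" and Sm: "\<forall>f\<in>H. S f \<in> borel_measurable M"
    and bd: "\<forall>f\<in>H. Re (l2_inner M (S f) f) \<le> K * Re (l2_inner M f f)" and f: "f \<in> H"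
  shows "Re (l2_inner M (S f) f) \<le> Mop M H S * Re (l2_inner M f f)"
proof (cases "l2_inner M f f = 0")
  case True
  have fL: "f \<in> L2 M" using H f by blast
  have "Re (l2_inner M f f) = 0" using True by simp
  hence "AE x in M. f x = 0" using N_zero_AE fL by blast
  hence "l2_inner M (S f) f = 0" using Sm f fL by (intro ip_zero_right) auto
  thus ?thesis using True by simp
next
  case False
  let ?Q = "{Re (l2_inner M (S f) f / l2_inner M f f) | f. f \<in> H \<and> l2_inner M f f \<noteq> 0}"
  have mem: "Re (l2_inner M (S f) f / l2_inner M f f) \<in> ?Q" using f False by blast
  have "x \<le> K" if xQ: "x \<in> ?Q" for x
  proof -
    obtain g where g: "g \<in> H" "l2_inner M g g \<noteq> 0" "x = Re (l2_inner M (S g) g / l2_inner M g g)"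
      using xQ by blast
    have pos: "Re (l2_inner M g g) > 0" using g(2) N_pos_iff by blast
    have "x = Re (l2_inner M (S g) g) / Re (l2_inner M g g)" using g(3) Re_div_N[OF g(2)] by simp
    also have "\<dots> \<le> K" using bd g(1) pos by (simp add: pos_divide_le_eq)
    finally show ?thesis .
  qed
  hence bdd: "bdd_above ?Q" unfolding bdd_above_def by blast
  have le: "Re (l2_inner M (S f) f / l2_inner M f f) \<le> Mop M H S"
    unfolding Mop_def by (rule cSup_upper[OF mem bdd])
  have pos: "Re (l2_inner M f f) > 0" using False N_pos_iff by blast
  show ?thesis using le Re_div_N[OF False] pos by (simp add: pos_divide_le_eq)
qed

lemma mop_lower:
  assumes H: "H \<subseteq> L2 M" and Sm: "\<forall>f\<in>H. S f \<in> borel_measurable M"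
    and bd: "\<forall>f\<in>H. - K * Re (l2_inner M f f) \<le> Re (l2_inner M (S f) f)" and f: "f \<in> H"
  shows "mop M H S * Re (l2_inner M f f) \<le> Re (l2_inner M (S f) f)"
proof (cases "l2_inner M f f = 0")
  case True
  have fL: "f \<in> L2 M" using H f by blast
  have "Re (l2_inner M f f) = 0" using True by simp
  hence "AE x in M. f x = 0" using N_zero_AE fL by blast
  hence "l2_inner M (S f) f = 0" using Sm f fL by (intro ip_zero_right) auto
  thus ?thesis using True by simp
next
  case False
  let ?Q = "{Re (l2_inner M (S f) f / l2_inner M f f) | f. f \<in> H \<and> l2_inner M f f \<noteq> 0}"
  have mem: "Re (l2_inner M (S f) f / l2_inner M f f) \<in> ?Q" using f False by blast
  have "- K \<le> x" if xQ: "x \<in> ?Q" for x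
  proof -
    obtain g where g: "g \<in> H" "l2_inner M g g \<noteq> 0" "x = Re (l2_inner M (S g) g / l2_inner M g g)"
      using xQ by blast
    have pos: "Re (l2_inner M g g) > 0" using g(2) N_pos_iff by blast
    have "x = Re (l2_inner M (S g) g) / Re (l2_inner M g g)" using g(3) Re_div_N[OF g(2)] by simp
    moreover have "- K \<le> Re (l2_inner M (S g) g) / Re (l2_inner M g g)"
      using bd g(1) pos by (simp add: pos_le_divide_eq)
    ultimately show ?thesis by simp
  qed
  hence bdd: "bdd_below ?Q" unfolding bdd_below_def by blast
  have le: "mop M H S \<le> Re (l2_inner M (S f) f / l2_inner M f f)"
    unfolding mop_def by (rule cInf_lower[OF mem bdd])
  have pos: "Re (l2_inner M f f) > 0" using False N_pos_iff by blast
  show ?thesis using le Re_div_N[OF False] pos by (simp add: pos_le_divide_eq)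
qed

lemma Mop_least:
  assumes ex: "g \<in> H" "l2_inner M g g \<noteq> 0"
    and le: "\<And>f. f \<in> H \<Longrightarrow> l2_inner M f f \<noteq> 0 \<Longrightarrow> Re (l2_inner M (S f) f) / Re (l2_inner M f f) \<le> B"
  shows "Mop M H S \<le> B"
  unfolding Mop_def
proof (rule cSup_least)
  show "{Re (l2_inner M (S f) f / l2_inner M f f) | f. f \<in> H \<and> l2_inner M f f \<noteq> 0} \<noteq> {}"
    using ex by blast
next
  fix x assume "x \<in> {Re (l2_inner M (S f) f / l2_inner M f f) | f. f \<in> H \<and> l2_inner M f f \<noteq> 0}"
  then obtain f where f: "f \<in> H" "l2_inner M f f \<noteq> 0" "x = Re (l2_inner M (S f) f / l2_inner M f f)"
    by blast
  show "x \<le> B" using le[OF f(1,2)] f(3) Re_div_N[OF f(2)] by simp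
qed

lemma L2_onD: "f \<in> L2_on M A \<Longrightarrow> f \<in> L2 M" and L2_onAE: "f \<in> L2_on M A \<Longrightarrow> AE x in M. x \<notin> A \<longrightarrow> f x = 0"
  by (auto simp: L2_on_def)

lemma block_meas:
  assumes [measurable]: "A \<in> sets M" and "T f \<in> borel_measurable M"
  shows "block_op A T f \<in> borel_measurable M"
  using assms(2) unfolding block_op_def by measurable

lemma block_ip:
  assumes A[measurable]: "A \<in> sets M" and sa: "selfadjoint_op_L2 M T" and f: "f \<in> L2_on M A"
  shows "l2_inner M (block_op A T f) f = l2_inner M (T f) f"
proof -
  have fL: "f \<in> L2 M" using f by (rule L2_onD)
  have Tf[measurable]: "T f \<in> borel_measurable M" using sa_L2[OF sa fL] by (rule L2_meas)
  have fm[measurable]: "f \<in> borel_measurable M" using fL by (rule L2_meas)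
  have ae: "AE x in M. x \<notin> A \<longrightarrow> f x = 0" using f by (rule L2_onAE)
  show ?thesis unfolding l2_inner_def block_op_def
    by (rule integral_cong_AE) (measurable, use ae in \<open>auto elim!: AE_mp simp: indicator_def\<close>)
qed

lemma indicator_L2_on:
  assumes A[measurable]: "A \<in> sets M" and pos: "measure M A > 0"
  shows "(\<lambda>x. indicator A x :: complex) \<in> L2_on M A"
    and "Re (l2_inner M (\<lambda>x. indicator A x :: complex) (\<lambda>x. indicator A x)) = measure M A"
proof -
  have fin: "emeasure M A < \<infinity>"
    using pos measure_zero_top[of M A] top.not_eq_extremum by force
  have eq: "(\<lambda>x. (cmod (indicator A x :: complex))\<^sup>2) = indicator A"
    by (auto simp: indicator_def)
  have int: "integrable M (indicator A :: _ \<Rightarrow> real)"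
    using fin A by (simp add: integrable_indicator_iff Int_absorb2 sets.sets_into_space)
  show "(\<lambda>x. indicator A x :: complex) \<in> L2_on M A"
    unfolding L2_on_def L2_def using int eq by (auto simp: indicator_def)
  show "Re (l2_inner M (\<lambda>x. indicator A x :: complex) (\<lambda>x. indicator A x)) = measure M A"
    unfolding Re_ip_ff eq using A by (simp add: Int_absorb2 sets.sets_into_space)
qed

lemma L2_zero: "(\<lambda>x. 0 :: complex) \<in> L2 M"
  by (simp add: L2_def)

lemma T_zero:
  assumes sa: "selfadjoint_op_L2 M T"
  shows "AE x in M. T (\<lambda>a. 0) x = 0"
proof -
  have "AE x in M. T (\<lambda>y. (-1) * 0 + 0) x = (-1) * T (\<lambda>a. 0) x + T (\<lambda>a. 0) x"
    by (rule sa_lin[OF sa L2_zero L2_zero])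
  thus ?thesis by simp
qed

lemma T_sum:
  assumes sa: "selfadjoint_op_L2 M T" and I: "finite I"
  shows "(\<forall>i\<in>I. g i \<in> L2 M) \<Longrightarrow> (\<lambda>a. \<Sum>i\<in>I. g i a) \<in> L2 M \<and>
     (AE x in M. T (\<lambda>a. \<Sum>i\<in>I. g i a) x = (\<Sum>i\<in>I. T (g i) x))"
  using I
proof (induction I rule: finite_induct)
  case empty
  then show ?case using T_zero[OF sa] L2_zero by simp
next
  case (insert j I)
  have gj: "g j \<in> L2 M" and IH: "(\<lambda>a. \<Sum>i\<in>I. g i a) \<in> L2 M"
     "AE x in M. T (\<lambda>a. \<Sum>i\<in>I. g i a) x = (\<Sum>i\<in>I. T (g i) x)"
    using insert by auto
  have eq: "(\<lambda>a. \<Sum>i\<in>insert j I. g i a) = (\<lambda>a. 1 * g j a + (\<Sum>i\<in>I. g i a))"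
    using insert by simp
  have L: "(\<lambda>a. 1 * g j a + (\<Sum>i\<in>I. g i a)) \<in> L2 M" by (rule L2_lin[OF gj IH(1)])
  have lin1: "AE x in M. T (\<lambda>a. 1 * g j a + (\<Sum>i\<in>I. g i a)) x = 1 * T (g j) x + T (\<lambda>a. \<Sum>i\<in>I. g i a) x"
    by (rule sa_lin[OF sa gj IH(1)])
  have ins: "j \<notin> I" "finite I" using insert by auto
  from IH(2) lin1 have "AE x in M. T (\<lambda>a. 1 * g j a + (\<Sum>i\<in>I. g i a)) x = (\<Sum>i\<in>insert j I. T (g i) x)"
    by eventually_elim (simp add: ins)
  thus ?case using L unfolding eq by simp
qed

lemma ip_sum_left:
  assumes "finite I" "\<forall>i\<in>I. g i \<in> L2 M" "h \<in> L2 M"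
  shows "l2_inner M (\<lambda>a. \<Sum>i\<in>I. g i a) h = (\<Sum>i\<in>I. l2_inner M (g i) h)"
proof -
  have "(\<lambda>x. (\<Sum>i\<in>I. g i x) * cnj (h x)) = (\<lambda>x. \<Sum>i\<in>I. g i x * cnj (h x))"
    by (simp add: sum_distrib_right)
  moreover have "integral\<^sup>L M (\<lambda>x. \<Sum>i\<in>I. g i x * cnj (h x)) = (\<Sum>i\<in>I. integral\<^sup>L M (\<lambda>x. g i x * cnj (h x)))"
    by (rule Bochner_Integration.integral_sum) (use L2_inner_int assms in auto)
  ultimately show ?thesis unfolding l2_inner_def by simp
qed

lemma ip_sum_right:
  assumes "finite I" "\<forall>i\<in>I. g i \<in> L2 M" "h \<in> L2 M"
  shows "l2_inner M h (\<lambda>a. \<Sum>i\<in>I. g i a) = (\<Sum>i\<in>I. l2_inner M h (g i))"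
proof -
  have "(\<lambda>x. h x * cnj (\<Sum>i\<in>I. g i x)) = (\<lambda>x. \<Sum>i\<in>I. h x * cnj (g i x))"
    by (simp add: sum_distrib_left)
  moreover have "integral\<^sup>L M (\<lambda>x. \<Sum>i\<in>I. h x * cnj (g i x)) = (\<Sum>i\<in>I. integral\<^sup>L M (\<lambda>x. h x * cnj (g i x)))"
    by (rule Bochner_Integration.integral_sum) (use L2_inner_int assms in auto)
  ultimately show ?thesis unfolding l2_inner_def by simp
qed

lemma quad_expand:
  fixes t :: real
  assumes sa: "selfadjoint_op_L2 M T" and x: "x \<in> L2 M" and y: "y \<in> L2 M"
  defines "z \<equiv> (\<lambda>a. complex_of_real t * y a + x a)"
  shows "Re (l2_inner M (T z) z) = Re (l2_inner M (T x) x) + 2 * t * Re (l2_inner M (T x) y) + t\<^sup>2 * Re (l2_inner M (T y) y)"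
    and "Re (l2_inner M z z) = Re (l2_inner M x x) + 2 * t * Re (l2_inner M x y) + t\<^sup>2 * Re (l2_inner M y y)"
    and "z \<in> L2 M"
proof -
  show zL: "z \<in> L2 M" unfolding z_def by (rule L2_lin[OF y x])
  have Tx: "T x \<in> L2 M" and Ty: "T y \<in> L2 M" using sa x y by (auto intro: sa_L2)
  have Tz: "T z \<in> L2 M" using sa zL by (rule sa_L2)
  have ae: "AE a in M. T z a = complex_of_real t * T y a + T x a"
    unfolding z_def by (rule sa_lin[OF sa y x])
  have lin: "(\<lambda>a. complex_of_real t * T y a + T x a) \<in> L2 M" by (rule L2_lin[OF Ty Tx])
  have "l2_inner M (T z) z = l2_inner M (\<lambda>a. complex_of_real t * T y a + T x a) z"
    by (rule ip_AE) (use Tz zL lin ae in auto)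
  also have "\<dots> = complex_of_real t * l2_inner M (T y) z + l2_inner M (T x) z"
    by (rule ip_lin_left[OF Ty Tx zL])
  also have "l2_inner M (T y) z = complex_of_real t * l2_inner M (T y) y + l2_inner M (T y) x"
    unfolding z_def using ip_lin_right[OF y x Ty, of "complex_of_real t"] by simp
  also have "l2_inner M (T x) z = complex_of_real t * l2_inner M (T x) y + l2_inner M (T x) x"
    unfolding z_def using ip_lin_right[OF y x Tx, of "complex_of_real t"] by simp
  finally have e1: "l2_inner M (T z) z = complex_of_real t * (complex_of_real t * l2_inner M (T y) y + l2_inner M (T y) x)
      + (complex_of_real t * l2_inner M (T x) y + l2_inner M (T x) x)" .
  have s: "Re (l2_inner M (T y) x) = Re (l2_inner M (T x) y)"
    using sa_sym[OF sa y x] ip_cnj[of M y "T x"] by simp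
  show "Re (l2_inner M (T z) z) = Re (l2_inner M (T x) x) + 2 * t * Re (l2_inner M (T x) y) + t\<^sup>2 * Re (l2_inner M (T y) y)"
    unfolding e1 using s by (simp add: algebra_simps power2_eq_square)
  have "l2_inner M z z = complex_of_real t * l2_inner M y z + l2_inner M x z"
    unfolding z_def by (rule ip_lin_left[OF y x zL[unfolded z_def]])
  also have "l2_inner M y z = complex_of_real t * l2_inner M y y + l2_inner M y x"
    unfolding z_def using ip_lin_right[OF y x y, of "complex_of_real t"] by simp
  also have "l2_inner M x z = complex_of_real t * l2_inner M x y + l2_inner M x x"
    unfolding z_def using ip_lin_right[OF y x x, of "complex_of_real t"] by simp
  finally have e2: "l2_inner M z z = complex_of_real t * (complex_of_real t * l2_inner M y y + l2_inner M y x)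
      + (complex_of_real t * l2_inner M x y + l2_inner M x x)" .
  have s2: "Re (l2_inner M y x) = Re (l2_inner M x y)"
    using ip_cnj[of M y x] by simp
  show "Re (l2_inner M z z) = Re (l2_inner M x x) + 2 * t * Re (l2_inner M x y) + t\<^sup>2 * Re (l2_inner M y y)"
    unfolding e2 using s2 by (simp add: algebra_simps power2_eq_square)
qed

lemma discr:
  fixes a b c :: real
  assumes h: "\<And>t. 0 \<le> a + 2 * t * b + t\<^sup>2 * c" and a: "0 \<le> a" and c: "0 \<le> c"
  shows "b \<le> sqrt (a * c)"
proof (cases "b \<le> 0")
  case True
  then show ?thesis using a c by (meson order_trans real_sqrt_ge_zero mult_nonneg_nonneg)
next
  case False
  hence b: "b > 0" by simp
  show ?thesis
  proof (cases "c = 0")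
    case True
    have "0 \<le> a + 2 * (- (a + 1) / (2 * b)) * b" using h[of "- (a + 1) / (2 * b)"] True by simp
    also have "2 * (- (a + 1) / (2 * b)) * b = - (a + 1)" using b by (simp add: field_simps)
    finally show ?thesis by simp
  next
    case False
    hence cp: "c > 0" using c by simp
    have "0 \<le> a + 2 * (- b / c) * b + (- b / c)\<^sup>2 * c" by (rule h)
    also have "a + 2 * (- b / c) * b + (- b / c)\<^sup>2 * c = a - b\<^sup>2 / c"
      using cp by (simp add: field_simps power2_eq_square)
    finally have "b\<^sup>2 / c \<le> a" by simp
    hence "b\<^sup>2 \<le> a * c" using cp by (simp add: pos_divide_le_eq)
    hence "sqrt (b\<^sup>2) \<le> sqrt (a * c)" by (rule real_sqrt_le_mono)
    thus ?thesis using b by simp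
  qed
qed

lemma final_alg:
  fixes P d n :: "nat \<Rightarrow> real" and B :: "nat \<Rightarrow> nat \<Rightarrow> real"
  assumes I: "finite I" and P0: "\<forall>i\<in>I. 0 \<le> P i" and Pd: "\<forall>i\<in>I. P i \<le> d i * n i"
    and d0: "\<forall>i\<in>I. 0 \<le> d i" and n0: "\<forall>i\<in>I. 0 \<le> n i"
    and Bs: "\<forall>i\<in>I. \<forall>j\<in>I. B i j \<le> sqrt (P i * P j)"
  shows "(\<Sum>i\<in>I. \<Sum>j\<in>I. B i j) \<le> (\<Sum>i\<in>I. d i) * (\<Sum>i\<in>I. n i)"
proof -
  have "(\<Sum>i\<in>I. \<Sum>j\<in>I. B i j) \<le> (\<Sum>i\<in>I. \<Sum>j\<in>I. sqrt (P i) * sqrt (P j))"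
    using Bs by (intro sum_mono) (simp add: real_sqrt_mult)
  also have "\<dots> = (\<Sum>i\<in>I. sqrt (P i))\<^sup>2"
    by (simp add: power2_eq_square sum_product)
  also have "\<dots> \<le> (\<Sum>i\<in>I. sqrt (d i) * sqrt (n i))\<^sup>2"
  proof (rule power_mono)
    show "(\<Sum>i\<in>I. sqrt (P i)) \<le> (\<Sum>i\<in>I. sqrt (d i) * sqrt (n i))"
      using Pd by (intro sum_mono) (simp add: real_sqrt_mult[symmetric])
    show "0 \<le> (\<Sum>i\<in>I. sqrt (P i))" using P0 by (intro sum_nonneg) simp
  qed
  also have "\<dots> \<le> (\<Sum>i\<in>I. (sqrt (d i))\<^sup>2) * (\<Sum>i\<in>I. (sqrt (n i))\<^sup>2)"
    by (rule Cauchy_Schwarz_ineq_sum)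
  also have "\<dots> = (\<Sum>i\<in>I. d i) * (\<Sum>i\<in>I. n i)"
    using d0 n0 by (simp cong: sum.cong)
  finally show ?thesis .
qed

lemma ind_mult_L2_on:
  assumes A[measurable]: "A \<in> sets M" and f: "f \<in> L2 M"
  shows "(\<lambda>a. indicator A a * f a) \<in> L2_on M A"
proof -
  have fm[measurable]: "f \<in> borel_measurable M" using f by (rule L2_meas)
  have fi: "integrable M (\<lambda>x. (cmod (f x))\<^sup>2)" using f by (simp add: L2_def)
  have "integrable M (\<lambda>x. (cmod (indicator A x * f x))\<^sup>2)"
    by (rule Bochner_Integration.integrable_bound[OF fi]) (auto simp: indicator_def)
  thus ?thesis unfolding L2_on_def L2_def by auto
qed

theorem lemma6p6:
  fixes M :: "'a measure" and T :: "('a \<Rightarrow> complex) \<Rightarrow> ('a \<Rightarrow> complex)"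
    and k :: nat and A :: "nat \<Rightarrow> 'a set"
  assumes "standard_prob_space M"
    and "selfadjoint_op_L2 M T"
    and "\<And>i. i \<in> {1..k} \<Longrightarrow> A i \<in> sets M"
    and "\<And>i. i \<in> {1..k} \<Longrightarrow> measure M (A i) > 0"
    and "\<And>i j. i \<in> {1..k} \<Longrightarrow> j \<in> {1..k} \<Longrightarrow> i \<noteq> j \<Longrightarrow> A i \<inter> A j = {}"
    and "(\<Union>i\<in>{1..k}. A i) = space M"
  shows "real (k - 1) * mop M (L2 M) T + Mop M (L2 M) T
           \<le> (\<Sum>i=1..k. Mop M (L2_on M (A i)) (block_op (A i) T))"
proof -
  note sa = assms(2)
  note Ameas = assms(3) and Apos = assms(4) and Adisj = assms(5) and Aun = assms(6)
  have ps: "prob_space M" using assms(1) by (simp add: standard_prob_space_def)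
  obtain K where K: "\<forall>f\<in>L2 M. \<bar>Re (l2_inner M (T f) f)\<bar> \<le> K * Re (l2_inner M f f)"
    using sa_bd[OF sa] by blast
  have Tm: "\<forall>f\<in>L2 M. T f \<in> borel_measurable M" using sa sa_L2 L2_meas by blast
  define m where "m = mop M (L2 M) T"
  define Mi where "Mi i = Mop M (L2_on M (A i)) (block_op (A i) T)" for i
  have low: "m * Re (l2_inner M g g) \<le> Re (l2_inner M (T g) g)" if g: "g \<in> L2 M" for g
    unfolding m_def
  proof (rule mop_lower[OF subset_refl Tm _ g])
    show "\<forall>f\<in>L2 M. - K * Re (l2_inner M f f) \<le> Re (l2_inner M (T f) f)"
      using K by (auto simp: abs_le_iff)
  qed
  have up: "Re (l2_inner M (T g) g) \<le> Mi i * Re (l2_inner M g g)" if i: "i \<in> {1..k}" and g: "g \<in> L2_on M (A i)" for i g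
  proof -
    have Ai: "A i \<in> sets M" using Ameas i by blast
    have "Re (l2_inner M (block_op (A i) T g) g) \<le> Mi i * Re (l2_inner M g g)"
      unfolding Mi_def
    proof (rule Mop_upper[OF _ _ _ g])
      show "L2_on M (A i) \<subseteq> L2 M" using L2_onD by blast
      show "\<forall>f\<in>L2_on M (A i). block_op (A i) T f \<in> borel_measurable M"
        using block_meas[OF Ai] Tm L2_onD by blast
      show "\<forall>f\<in>L2_on M (A i). Re (l2_inner M (block_op (A i) T f) f) \<le> K * Re (l2_inner M f f)"
        using K L2_onD block_ip[OF Ai sa] by (metis abs_le_iff)
    qed
    thus ?thesis using block_ip[OF Ai sa g] by simp
  qed
  have Mi_m: "m \<le> Mi i" if i: "i \<in> {1..k}" for i
  proof -
    have Ai: "A i \<in> sets M" using Ameas i by blast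
    let ?g = "(\<lambda>x. indicator (A i) x :: complex)"
    have g: "?g \<in> L2_on M (A i)" and Ng: "Re (l2_inner M ?g ?g) = measure M (A i)"
      using indicator_L2_on[OF Ai Apos[OF i]] by auto
    have "m * measure M (A i) \<le> Mi i * measure M (A i)"
      using low[OF L2_onD[OF g]] up[OF i g] Ng by simp
    thus ?thesis using Apos[OF i] by simp
  qed
  have k1: "k \<ge> 1"
  proof (rule ccontr)
    assume "\<not> k \<ge> 1"
    hence "k = 0" by simp
    hence "space M = {}" using Aun by simp
    thus False using prob_space.not_empty[OF ps] by simp
  qed
  have "Mop M (L2 M) T \<le> (\<Sum>i=1..k. Mi i) - real (k - 1) * m"
  proof -
    have "1 \<in> {1..k}" using k1 by simp
    let ?g = "(\<lambda>x. indicator (A 1) x :: complex)"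
    have g1: "?g \<in> L2_on M (A 1)" and Ng1: "Re (l2_inner M ?g ?g) = measure M (A 1)"
      using indicator_L2_on[OF Ameas Apos, OF \<open>1 \<in> {1..k}\<close> \<open>1 \<in> {1..k}\<close>] by auto
    have g1ne: "l2_inner M ?g ?g \<noteq> 0"
      using Ng1 Apos[OF \<open>1 \<in> {1..k}\<close>] N_pos_iff by fastforce
    show ?thesis
    proof (rule Mop_least[OF L2_onD[OF g1] g1ne])
      fix f assume f: "f \<in> L2 M" and fne: "l2_inner M f f \<noteq> 0"
      show "Re (l2_inner M (T f) f) / Re (l2_inner M f f) \<le> (\<Sum>i=1..k. Mi i) - real (k - 1) * m"
      proof -
        have Npos: "Re (l2_inner M f f) > 0" using fne N_pos_iff by blast
        define I where "I = {1..k}"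
        have I: "finite I" unfolding I_def by simp
        define fi where "fi i = (\<lambda>a. indicator (A i) a * f a)" for i
        have fiA: "fi i \<in> L2_on M (A i)" if "i \<in> I" for i
          unfolding fi_def using ind_mult_L2_on[OF Ameas f] that I_def by blast
        have fiL: "\<forall>i\<in>I. fi i \<in> L2 M" using fiA L2_onD by blast
        have TfiL: "\<forall>i\<in>I. T (fi i) \<in> L2 M" using fiL sa_L2[OF sa] by blast
        define F where "F = (\<lambda>a. \<Sum>i\<in>I. fi i a)"
        have FT: "F \<in> L2 M" "AE x in M. T F x = (\<Sum>i\<in>I. T (fi i) x)"
          using T_sum[OF sa I fiL] unfolding F_def by auto
        have GT: "(\<lambda>a. \<Sum>i\<in>I. T (fi i) a) \<in> L2 M"
          using T_sum[OF sa I, of "\<lambda>i. T (fi i)"] TfiL by auto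
        have Ff: "F a = f a" if a: "a \<in> space M" for a
        proof -
          obtain i0 where i0: "i0 \<in> I" "a \<in> A i0" using a Aun unfolding I_def by blast
          have "F a = (\<Sum>i\<in>I. if i = i0 then f a else 0)"
            unfolding F_def fi_def
          proof (rule sum.cong[OF refl])
            fix i assume i: "i \<in> I"
            show "indicator (A i) a * f a = (if i = i0 then f a else 0)"
            proof (cases "i = i0")
              case True thus ?thesis using i0 by simp
            next
              case False
              hence "a \<notin> A i" using Adisj[of i i0] i i0 unfolding I_def by blast
              thus ?thesis using False by simp
            qed
          qed
          also have "\<dots> = f a" using I i0 by simp
          finally show ?thesis .
        qed
        have aeF: "AE x in M. f x = F x" using Ff by simp
        have fm[measurable]: "f \<in> borel_measurable M" using f by (rule L2_meas)
        have Fm[measurable]: "F \<in> borel_measurable M" using FT(1) by (rule L2_meas)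
        have aeTF: "AE x in M. T f x = T F x" by (rule sa_AE[OF sa f FT(1) aeF])
        have ipT: "l2_inner M (T f) f = (\<Sum>i\<in>I. \<Sum>j\<in>I. l2_inner M (T (fi i)) (fi j))"
        proof -
          have "l2_inner M (T f) f = l2_inner M (\<lambda>a. \<Sum>i\<in>I. T (fi i) a) F"
          proof (rule ip_AE)
            show "T f \<in> borel_measurable M" using Tm f by blast
            show "(\<lambda>a. \<Sum>i\<in>I. T (fi i) a) \<in> borel_measurable M" using GT by (rule L2_meas)
            show "AE x in M. T f x = (\<Sum>i\<in>I. T (fi i) x)" using aeTF FT(2) by eventually_elim simp
          qed (use aeF in auto)
          also have "\<dots> = (\<Sum>i\<in>I. l2_inner M (T (fi i)) F)"
            by (rule ip_sum_left[OF I TfiL FT(1)])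
          also have "\<dots> = (\<Sum>i\<in>I. \<Sum>j\<in>I. l2_inner M (T (fi i)) (fi j))"
            unfolding F_def using ip_sum_right[OF I fiL] TfiL by simp
          finally show ?thesis .
        qed
        have ipN: "l2_inner M f f = (\<Sum>i\<in>I. \<Sum>j\<in>I. l2_inner M (fi i) (fi j))"
        proof -
          have "l2_inner M f f = l2_inner M F F"
            by (rule ip_AE) (use aeF in auto)
          also have "\<dots> = (\<Sum>i\<in>I. l2_inner M (fi i) F)"
            unfolding F_def by (rule ip_sum_left[OF I fiL FT(1)[unfolded F_def]])
          also have "\<dots> = (\<Sum>i\<in>I. \<Sum>j\<in>I. l2_inner M (fi i) (fi j))"
            unfolding F_def using ip_sum_right[OF I fiL] fiL by simp
          finally show ?thesis .
        qed
        have off: "l2_inner M (fi i) (fi j) = 0" if "i \<in> I" "j \<in> I" "i \<noteq> j" for i j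
        proof -
          have dj: "A i \<inter> A j = {}" using Adisj that unfolding I_def by blast
          have "(\<lambda>x. fi i x * cnj (fi j x)) = (\<lambda>x. 0)"
          proof (rule ext)
            fix x
            show "fi i x * cnj (fi j x) = 0"
            proof (cases "x \<in> A i")
              case True
              hence "x \<notin> A j" using dj by blast
              thus ?thesis unfolding fi_def by simp
            next
              case False
              thus ?thesis unfolding fi_def by simp
            qed
          qed
          thus ?thesis unfolding l2_inner_def by simp
        qed
        define n where "n i = Re (l2_inner M (fi i) (fi i))" for i
        define Bm where "Bm i j = Re (l2_inner M (T (fi i)) (fi j)) - m * Re (l2_inner M (fi i) (fi j))" for i j
        define P where "P i = Bm i i" for i
        define d where "d i = Mi i - m" for i
        have Nsum: "Re (l2_inner M f f) = (\<Sum>i\<in>I. n i)"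
        proof -
          have "Re (l2_inner M f f) = (\<Sum>i\<in>I. \<Sum>j\<in>I. Re (l2_inner M (fi i) (fi j)))"
            by (simp add: ipN)
          also have "\<dots> = (\<Sum>i\<in>I. \<Sum>j\<in>I. if j = i then n i else 0)"
            using off unfolding n_def by (intro sum.cong refl) auto
          also have "\<dots> = (\<Sum>i\<in>I. n i)" using I by simp
          finally show ?thesis .
        qed
        have PQ: "Re (l2_inner M (T f) f) - m * Re (l2_inner M f f) = (\<Sum>i\<in>I. \<Sum>j\<in>I. Bm i j)"
          by (simp add: ipT ipN Bm_def sum_subtractf sum_distrib_left)
        have Bs: "\<forall>i\<in>I. \<forall>j\<in>I. Bm i j \<le> sqrt (P i * P j)"
        proof (intro ballI)
          fix i j assume i: "i \<in> I" and j: "j \<in> I"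
          have x: "fi i \<in> L2 M" and y: "fi j \<in> L2 M" using fiL i j by auto
          have Px: "0 \<le> P i" using low[OF x] unfolding P_def Bm_def by simp
          have Py: "0 \<le> P j" using low[OF y] unfolding P_def Bm_def by simp
          show "Bm i j \<le> sqrt (P i * P j)"
          proof (rule discr[OF _ Px Py])
            fix t :: real
            note q = quad_expand[OF sa x y, of t]
            have "P i + 2 * t * Bm i j + t\<^sup>2 * P j
                = Re (l2_inner M (T (\<lambda>a. complex_of_real t * fi j a + fi i a)) (\<lambda>a. complex_of_real t * fi j a + fi i a))
                  - m * Re (l2_inner M (\<lambda>a. complex_of_real t * fi j a + fi i a) (\<lambda>a. complex_of_real t * fi j a + fi i a))"
              unfolding q(1) q(2) P_def Bm_def by (simp add: algebra_simps)
            also have "\<dots> \<ge> 0" using low[OF q(3)] by simp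
            finally show "0 \<le> P i + 2 * t * Bm i j + t\<^sup>2 * P j" by simp
          qed
        qed
        have P0: "\<forall>i\<in>I. 0 \<le> P i" using low fiL unfolding P_def Bm_def by simp
        have Pd: "\<forall>i\<in>I. P i \<le> d i * n i"
        proof
          fix i assume i: "i \<in> I"
          have "Re (l2_inner M (T (fi i)) (fi i)) \<le> Mi i * n i"
            using up[OF _ fiA[OF i]] i unfolding I_def n_def by blast
          thus "P i \<le> d i * n i" unfolding P_def Bm_def d_def n_def by (simp add: algebra_simps)
        qed
        have d0: "\<forall>i\<in>I. 0 \<le> d i" using Mi_m unfolding d_def I_def by simp
        have n0: "\<forall>i\<in>I. 0 \<le> n i" unfolding n_def using N_nonneg by blast
        have main: "Re (l2_inner M (T f) f) - m * Re (l2_inner M f f) \<le> (\<Sum>i\<in>I. d i) * Re (l2_inner M f f)"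
          by (subst PQ, subst Nsum, rule final_alg[OF I P0 Pd d0 n0 Bs])
        have dsum: "(\<Sum>i\<in>I. d i) = (\<Sum>i=1..k. Mi i) - real k * m"
          unfolding d_def I_def by (simp add: sum_subtractf)
        have "Re (l2_inner M (T f) f) \<le> ((\<Sum>i=1..k. Mi i) - real k * m + m) * Re (l2_inner M f f)"
          using main unfolding dsum by (simp add: algebra_simps)
        hence "Re (l2_inner M (T f) f) / Re (l2_inner M f f) \<le> (\<Sum>i=1..k. Mi i) - real k * m + m"
          using Npos by (simp add: pos_divide_le_eq)
        moreover have "real (k - 1) = real k - 1" using k1 by simp
        ultimately show ?thesis by (simp add: algebra_simps)
      qed
    qed
  qed
  moreover have "real (k - 1) = real k - 1" using k1 by simp
  ultimately show ?thesis unfolding m_def Mi_def by simp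
qed

end
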